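(* Let $d\in\mathbb N$ and let $(\mathrm{RN}_{n,M,Q})_{n,M,Q\in\mathbb Z}\subseteq\mathbb N_0$ satisfy for all $n,M,Q\in\mathbb N$ that $\mathrm{RN}_{0,M,Q}=0$ and $$\mathrm{RN}_{n,M,Q}\le dM^n+\sum_{l=0}^{n-1}\Big[QM^{n-l}\big(d+\mathrm{RN}_{l,M,Q}+\mathbb 1_{\mathbb N}(l)\,\mathrm{RN}_{l-1,M,Q}\big)\Big].$$ Then for all $N\in\mathbb N$, $\mathrm{RN}_{N,N,N}\le 8dN^{2N}$.
   Context: $\mathbb 1_{\mathbb N}(l)$ equals $1$ if $l\in\mathbb N=\{1,2,\dots\}$ and $0$ otherwise. *)

theory Defs
  imports Main
begin

definition indN :: "int \<Rightarrow> nat" where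
  "indN l = (if l \<ge> 1 then 1 else 0)"

end

theory Submission
  imports Defs "HOL-Analysis.Analysis"
begin

fun aa :: "nat \<Rightarrow> nat \<Rightarrow> nat \<Rightarrow> nat" where
  "aa M Q 0 = 0"
| "aa M Q (Suc 0) = M * (Q + 1)"
| "aa M Q (Suc (Suc n)) = M * (Q + 1) * aa M Q (Suc n) + Q * M * aa M Q n + Q * M"

definition uu :: "nat \<Rightarrow> nat \<Rightarrow> nat \<Rightarrow> nat" where
  "uu M Q l = 1 + aa M Q l + indN (int l) * aa M Q (l - 1)"

lemma sum_form:
  "n \<ge> 1 \<Longrightarrow> M ^ n + (\<Sum>l<n. Q * M ^ (n - l) * uu M Q l) = aa M Q n"
proof (induction n rule: nat_induct_at_least)
  case base
  then show ?case by (simp add: uu_def indN_def algebra_simps)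
next
  case (Suc n)
  have s: "(\<Sum>l<Suc n. Q * M ^ (Suc n - l) * uu M Q l)
      = M * (\<Sum>l<n. Q * M ^ (n - l) * uu M Q l) + Q * M * uu M Q n"
    by (simp add: sum_distrib_left Suc_diff_le less_imp_le mult.assoc mult.left_commute)
  obtain k where k: "n = Suc k" using Suc.hyps by (cases n) auto
  have "M ^ Suc n + (\<Sum>l<Suc n. Q * M ^ (Suc n - l) * uu M Q l)
      = M * (M ^ n + (\<Sum>l<n. Q * M ^ (n - l) * uu M Q l)) + Q * M * uu M Q n"
    using s by (simp add: algebra_simps)
  also have "\<dots> = M * aa M Q n + Q * M * uu M Q n" using Suc.IH by simp
  also have "\<dots> = aa M Q (Suc n)"
    using k by (simp add: uu_def indN_def algebra_simps)
  finally show ?case .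
qed

lemma aa_bound:
  assumes "M \<ge> 1" "Q \<ge> 1"
  shows "aa M Q n \<le> (M * (Q + 2)) ^ n \<and> aa M Q (Suc n) \<le> (M * (Q + 2)) ^ Suc n"
proof (induction n)
  case 0
  then show ?case using assms by simp
next
  case (Suc n)
  define x where "x = M * (Q + 2)"
  have IH1: "aa M Q (Suc n) \<le> x ^ Suc n" and IH0: "aa M Q n \<le> x ^ n"
    using Suc.IH x_def by auto
  have xge: "x \<ge> Q + 2" using assms unfolding x_def
    by (metis mult_1 mult_le_mono1)
  have key: "Q * M * aa M Q n + Q * M \<le> M * x ^ Suc n"
  proof (cases n)
    case 0
    have "Q * M \<le> M * x" using xge assms by (simp add: mult.commute)
    then show ?thesis using 0 by simp
  next
    case (Suc k)
    have "x ^ n \<ge> x" using Suc assms xge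
      by (metis One_nat_def Suc_le_eq add_gr_0 less_Suc_eq_0_disj power_increasing power_one_right zero_less_Suc zero_less_numeral one_le_numeral le_add2 order.trans le_add1 Suc_le_mono)
    hence q: "Q \<le> x ^ n" using xge by linarith
    have "Q * aa M Q n + Q \<le> Q * x ^ n + x ^ n" using IH0 q mult_le_mono2 by (meson add_le_mono)
    also have "\<dots> \<le> (Q + 2) * x ^ n" by (simp add: algebra_simps)
    also have "\<dots> \<le> x * x ^ n" using xge by (rule mult_le_mono1)
    finally have "Q * aa M Q n + Q \<le> x ^ Suc n" by simp
    hence "M * (Q * aa M Q n + Q) \<le> M * x ^ Suc n" by simp
    then show ?thesis by (simp add: algebra_simps)
  qed
  have "aa M Q (Suc (Suc n)) = M * (Q + 1) * aa M Q (Suc n) + (Q * M * aa M Q n + Q * M)" by simp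
  also have "\<dots> \<le> M * (Q + 1) * x ^ Suc n + M * x ^ Suc n"
    using IH1 key by (meson add_le_mono mult_le_mono2)
  also have "\<dots> = x ^ Suc (Suc n)" by (simp add: x_def algebra_simps)
  finally show ?case using IH1 x_def by simp
qed

lemma pow_bound:
  assumes "N \<ge> (1::nat)"
  shows "(N + 2) ^ N \<le> 8 * N ^ N"
proof -
  have Np: "real N > 0" using assms by simp
  have "1 + 2 / real N \<le> exp (2 / real N)" by (rule exp_ge_add_one_self)
  hence "(1 + 2 / real N) ^ N \<le> exp (2 / real N) ^ N"
    by (rule power_mono) (use Np in auto)
  also have "\<dots> = exp (real N * (2 / real N))" by (simp only: exp_of_nat_mult)
  also have "\<dots> = exp (1 + 1)" using Np by simp
  also have "\<dots> = exp 1 * exp 1" by (simp only: exp_add)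
  also have "\<dots> \<le> 8"
  proof -
    have "exp 1 < (272/100::real)" by (rule e_less_272)
    moreover have "exp (1::real) > 0" by simp
    ultimately have "exp 1 * exp 1 < (272/100) * (272/100::real)"
      using mult_strict_mono[of "exp 1" "272/100::real" "exp 1" "272/100"] by simp
    thus ?thesis by simp
  qed
  finally have h: "(1 + 2 / real N) ^ N \<le> 8" .
  have e: "real N * (1 + 2 / real N) = real N + 2" using Np by (simp add: field_simps)
  have "real ((N + 2) ^ N) = (real N * (1 + 2 / real N)) ^ N"
    by (simp only: e) (simp add: add.commute)
  also have "\<dots> = real N ^ N * (1 + 2 / real N) ^ N" by (simp add: power_mult_distrib)
  also have "\<dots> \<le> real N ^ N * 8" using h by (simp add: mult_left_mono)
  finally have "real ((N + 2) ^ N) \<le> real (8 * N ^ N)" by simp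
  thus ?thesis by linarith
qed

theorem lemma3p15:
  fixes d :: nat and RN :: "int \<Rightarrow> int \<Rightarrow> int \<Rightarrow> nat"
  assumes "d \<ge> 1"
    and "\<And>n M Q. n \<ge> 1 \<Longrightarrow> M \<ge> 1 \<Longrightarrow> Q \<ge> 1 \<Longrightarrow>
           RN 0 (int M) (int Q) = 0 \<and>
           RN (int n) (int M) (int Q) \<le> d * M ^ n +
             (\<Sum>l = 0..n - 1. Q * M ^ (n - l) *
                (d + RN (int l) (int M) (int Q) + indN (int l) * RN (int l - 1) (int M) (int Q)))"
  shows "\<And>N. N \<ge> 1 \<Longrightarrow> RN (int N) (int N) (int N) \<le> 8 * d * N ^ (2 * N)"
proof -
  fix N :: nat assume N: "N \<ge> 1"
  have R0: "RN 0 (int N) (int N) = 0" using assms(2)[of 1 N N] N by simp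
  have main: "RN (int n) (int N) (int N) \<le> d * aa N N n" for n
  proof (induction n rule: less_induct)
    case (less n)
    show ?case
    proof (cases "n = 0")
      case True then show ?thesis using R0 by simp
    next
      case False
      hence n1: "n \<ge> 1" by simp
      have rng: "{0..n - 1} = {..<n}" using n1 by auto
      have "RN (int n) (int N) (int N) \<le> d * N ^ n +
             (\<Sum>l<n. N * N ^ (n - l) *
                (d + RN (int l) (int N) (int N) + indN (int l) * RN (int l - 1) (int N) (int N)))"
        using assms(2)[OF n1 N N] rng by simp
      also have "\<dots> \<le> d * N ^ n + (\<Sum>l<n. N * N ^ (n - l) * (d * uu N N l))"
      proof -
        have "d + RN (int l) (int N) (int N) + indN (int l) * RN (int l - 1) (int N) (int N)
              \<le> d * uu N N l" if l: "l < n" for l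
        proof -
          have a: "RN (int l) (int N) (int N) \<le> d * aa N N l" using less.IH l by simp
          have b: "indN (int l) * RN (int l - 1) (int N) (int N) \<le> d * (indN (int l) * aa N N (l - 1))"
          proof (cases "l \<ge> 1")
            case True
            have "int l - 1 = int (l - 1)" using True by simp
            moreover have "RN (int (l - 1)) (int N) (int N) \<le> d * aa N N (l - 1)"
              using less.IH l by simp
            ultimately show ?thesis using True by (simp add: indN_def)
          next
            case False then show ?thesis by (simp add: indN_def)
          qed
          have "d + RN (int l) (int N) (int N) + indN (int l) * RN (int l - 1) (int N) (int N)
             \<le> d + d * aa N N l + d * (indN (int l) * aa N N (l - 1))" using a b by linarith
          thus ?thesis by (simp add: uu_def algebra_simps)
        qed
        thus ?thesis by (intro add_left_mono sum_mono mult_le_mono2) auto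
      qed
      also have "\<dots> = d * (N ^ n + (\<Sum>l<n. N * N ^ (n - l) * uu N N l))"
        by (simp add: algebra_simps sum_distrib_left)
      also have "\<dots> = d * aa N N n" using sum_form[OF n1] by simp
      finally show ?thesis .
    qed
  qed
  have "aa N N N \<le> (N * (N + 2)) ^ N" using aa_bound[OF N N] by simp
  also have "\<dots> = N ^ N * (N + 2) ^ N" by (rule power_mult_distrib)
  also have "\<dots> \<le> N ^ N * (8 * N ^ N)" using pow_bound[OF N] by simp
  also have "\<dots> = 8 * N ^ (2 * N)" by (simp add: power_mult mult.commute power2_eq_square power_mult_distrib)
  finally have "d * aa N N N \<le> d * (8 * N ^ (2 * N))" by simp
  hence "d * aa N N N \<le> 8 * d * N ^ (2 * N)" by (simp add: algebra_simps)
  thus "RN (int N) (int N) (int N) \<le> 8 * d * N ^ (2 * N)" using main[of N] by linarith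
qed

end
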